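(* Assume $S\times M\neq\emptyset$, let $(x,\lambda):[t_0,+\infty[\ \to X\times Y$ be a solution of (AHT), and suppose that $\varepsilon$ is twice continuously differentiable and there exists $t_+\ge t_0$ such that $\varepsilon^2(t)+\dot\varepsilon(t)\ge0$ and $2\varepsilon(t)\dot\varepsilon(t)+\ddot\varepsilon(t)\le0$ for all $t\ge t_+$. Then $(x(t),\lambda(t))\to\operatorname{proj}_{S\times M}(0,0)$ strongly in $X\times Y$ as $t\to+\infty$.
   Context: $X,Y$ are real Hilbert spaces; $X\times Y$ carries the product inner product and norm $\|\cdot\|$. Standing assumptions: $f:X\to\mathbb{R}$ is convex and continuously differentiable with $\nabla f$ Lipschitz continuous on bounded subsets of $X$; $A:X\to Y$ is linear and continuous with adjoint $A^*$; $b\in Y$; $\varepsilon:[t_0,+\infty[\ \to\ ]0,+\infty[$ ($t_0\ge0$) satisfies $\lim_{t\to+\infty}\varepsilon(t)=0$. $L(x,\lambda)=f(x)+\langle\lambda,Ax-b\rangle_Y$. $S$ is the set of optimal solutions of $\min\{f(x):Ax=b\}$, $M$ the set of Lagrange multipliers; $S\times M$ is the (closed convex) set of saddle points of $L$, and $\operatorname{proj}_{S\times M}(0,0)$ is its element of least norm. (AHT) is the system $\dot x+\nabla f(x)+A^*\lambda+\varepsilon(t)x=0$, $\dot\lambda+b-Ax+\varepsilon(t)\lambda=0$; a solution is a continuously differentiable $(x,\lambda):[t_0,+\infty[\ \to X\times Y$ satisfying it on $[t_0,+\infty[$ (existence and uniqueness for every initial datum is assumed). *)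

theory Defs
  imports "HOL-Analysis.Analysis"
begin

definition opt_solutions :: "('x \<Rightarrow> real) \<Rightarrow> ('x \<Rightarrow> 'y) \<Rightarrow> 'y \<Rightarrow> 'x set" where
  "opt_solutions f A b = {x. A x = b \<and> (\<forall>z. A z = b \<longrightarrow> f x \<le> f z)}"

definition lagrange_multipliers ::
  "('x::real_vector \<Rightarrow> 'x) \<Rightarrow> ('y \<Rightarrow> 'x) \<Rightarrow> 'x set \<Rightarrow> 'y set" where
  "lagrange_multipliers gradf Aadj S = {l. \<exists>x\<in>S. gradf x + Aadj l = 0}"

definition proj_set :: "'a::real_normed_vector set \<Rightarrow> 'a \<Rightarrow> 'a" where
  "proj_set C a = (THE p. p \<in> C \<and> (\<forall>q\<in>C. dist a p \<le> dist a q))"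

end

theory Submission
  imports Defs
begin

lemma stay_below:
  fixes \<phi> \<phi>' :: "real \<Rightarrow> real"
  assumes d: "\<And>t. t \<ge> T \<Longrightarrow> (\<phi> has_real_derivative \<phi>' t) (at t)"
    and s: "\<And>t. t \<ge> T \<Longrightarrow> \<phi> t > 0 \<Longrightarrow> \<phi>' t \<le> 0"
    and t: "t \<ge> T"
  shows "\<phi> t \<le> max (\<phi> T) 0"
proof (rule ccontr)
  let ?M = "max (\<phi> T) 0"
  assume "\<not> ?thesis"
  hence gt: "\<phi> t > ?M" by (simp only: not_le)
  have cont: "continuous_on {T..t} \<phi>"
    using d by (meson DERIV_isCont atLeastAtMost_iff continuous_at_imp_continuous_on)
  let ?S = "{T..t} \<inter> \<phi> -` {..?M}"
  have cl: "closed ?S" using continuous_closed_preimage[OF cont] by auto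
  have TS: "T \<in> ?S" using t by auto
  have bdd: "bdd_above ?S" by (auto intro: bdd_aboveI[of _ t])
  define u where "u = Sup ?S"
  have uS: "u \<in> ?S" unfolding u_def using closed_contains_Sup[OF _ bdd cl] TS by blast
  have "u \<noteq> t" using uS gt by auto
  with uS have ut: "u < t" by auto
  obtain z where z: "u < z" "z < t" "\<phi> t - \<phi> u = (t - u) * \<phi>' z"
    using MVT2[OF ut, of \<phi> \<phi>'] d uS by auto
  have "z \<notin> ?S"
  proof
    assume "z \<in> ?S"
    hence "z \<le> u" unfolding u_def using bdd by (simp add: cSup_upper)
    with z show False by simp
  qed
  hence "\<phi> z > ?M" using z uS by auto
  hence "\<phi>' z \<le> 0" using s z uS by auto
  hence "\<phi> t \<le> \<phi> u" using z ut by (smt (verit) mult_nonneg_nonpos)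
  with uS gt show False by auto
qed

lemma decay_lemma:
  fixes \<phi> \<phi>' :: "real \<Rightarrow> real"
  assumes d: "\<And>t. t \<ge> T \<Longrightarrow> (\<phi> has_real_derivative \<phi>' t) (at t)"
    and s: "\<And>t. t \<ge> T \<Longrightarrow> \<phi> t > c \<Longrightarrow> \<phi>' t \<le> - (\<phi> t - c) / (C + t)"
    and CT: "C + T > 0"
    and t: "t \<ge> T"
  shows "\<phi> t \<le> c + max (\<phi> T - c) 0 * (C + T) / (C + t)"
proof -
  define \<psi> where "\<psi> t = (C + t) * (\<phi> t - c)" for t
  have d2: "(\<psi> has_real_derivative ((\<phi> t - c) + (C + t) * \<phi>' t)) (at t)" if "t \<ge> T" for t
    unfolding \<psi>_def using d[OF that]
    by (auto intro!: derivative_eq_intros)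
  have s2: "(\<phi> t - c) + (C + t) * \<phi>' t \<le> 0" if "t \<ge> T" "\<psi> t > 0" for t
  proof -
    have Ct: "C + t > 0" using CT that by simp
    hence "\<phi> t > c" using that(2) unfolding \<psi>_def by (simp add: zero_less_mult_iff)
    hence "\<phi>' t \<le> - (\<phi> t - c) / (C + t)" using s that by auto
    hence "\<phi>' t * (C + t) \<le> - (\<phi> t - c)" using Ct by (simp add: pos_le_divide_eq)
    thus ?thesis by (simp add: mult.commute)
  qed
  have "\<psi> t \<le> max (\<psi> T) 0" using stay_below[of T \<psi>, OF d2 s2 t] by auto
  also have "\<dots> \<le> max (\<phi> T - c) 0 * (C + T)"
    unfolding \<psi>_def using CT by (auto simp: max_def mult.commute)
  finally have "(C + t) * (\<phi> t - c) \<le> max (\<phi> T - c) 0 * (C + T)" unfolding \<psi>_def .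
  moreover have "C + t > 0" using CT t by simp
  ultimately show ?thesis by (simp add: field_simps)
qed


lemma parallelogram_eq:
  fixes a b :: "'a::real_inner"
  shows "(norm (a - b))\<^sup>2 = 2 * (norm a)\<^sup>2 + 2 * (norm b)\<^sup>2 - (norm (a + b))\<^sup>2"
  by (simp add: power2_norm_eq_inner inner_simps inner_commute)

lemma cauchy_helper:
  fixes X :: "nat \<Rightarrow> 'a::metric_space"
  assumes h: "\<And>m n. Mz \<le> m \<Longrightarrow> Mz \<le> n \<Longrightarrow> (dist (X m) (X n))\<^sup>2 \<le> K * (inverse (real m + 1) + inverse (real n + 1))"
  shows "Cauchy X"
proof (rule metric_CauchyI)
  fix e :: real assume e: "e > 0"
  obtain N :: nat where N: "real N > 2 * \<bar>K\<bar> / e\<^sup>2" using reals_Archimedean2 by blast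
  show "\<exists>M. \<forall>m\<ge>M. \<forall>n\<ge>M. dist (X m) (X n) < e"
  proof (intro exI[of _ "max N Mz"] allI impI)
    fix m n assume m: "max N Mz \<le> m" and n: "max N Mz \<le> n"
    have im: "inverse (real m + 1) \<le> inverse (real N + 1)" using m by (simp add: field_simps)
    have in': "inverse (real n + 1) \<le> inverse (real N + 1)" using n by (simp add: field_simps)
    have "(dist (X m) (X n))\<^sup>2 \<le> K * (inverse (real m + 1) + inverse (real n + 1))" using h m n by simp
    also have "\<dots> \<le> \<bar>K\<bar> * (inverse (real m + 1) + inverse (real n + 1))"
      by (intro mult_right_mono) auto
    also have "\<dots> \<le> \<bar>K\<bar> * (2 * inverse (real N + 1))"
    proof -
      have "inverse (real m + 1) + inverse (real n + 1) \<le> 2 * inverse (real N + 1)" using im in' by linarith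
      thus ?thesis by (intro mult_left_mono) auto
    qed
    also have "\<dots> < e\<^sup>2"
    proof -
      have "2 * \<bar>K\<bar> / e\<^sup>2 < real N + 1" using N by linarith
      hence "2 * \<bar>K\<bar> < (real N + 1) * e\<^sup>2" using e by (simp add: pos_divide_less_eq)
      hence "2 * \<bar>K\<bar> < e\<^sup>2 * (real N + 1)" by (simp add: mult.commute)
      thus ?thesis by (simp add: field_simps)
    qed
    finally have "(dist (X m) (X n))\<^sup>2 < e\<^sup>2" .
    thus "dist (X m) (X n) < e" using e by (simp add: power_less_imp_less_base)
  qed
qed

lemma min_norm_exists:
  fixes C :: "'a::{real_inner,complete_space} set"
  assumes cl: "closed C" and cv: "convex C" and ne: "C \<noteq> {}"
  shows "\<exists>m\<in>C. \<forall>u\<in>C. norm m \<le> norm u"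
proof -
  define d where "d = Inf (norm ` C)"
  have bdd: "bdd_below (norm ` C)" by (auto intro: bdd_belowI[of _ 0])
  have dle: "d \<le> norm u" if "u \<in> C" for u
    unfolding d_def using bdd that by (simp add: cInf_lower)
  have d0: "d \<ge> 0" unfolding d_def using ne by (intro cInf_greatest) auto
  have "\<forall>n. \<exists>c. c \<in> C \<and> norm c < d + inverse (real n + 1)"
  proof
    fix n
    have i: "Inf (norm ` C) < d + inverse (real n + 1)" unfolding d_def by simp
    have ne': "norm ` C \<noteq> {}" using ne by simp
    obtain y where "y \<in> norm ` C" "y < d + inverse (real n + 1)"
      using cInf_lessD[OF ne' i] by (elim bexE)
    thus "\<exists>c. c \<in> C \<and> norm c < d + inverse (real n + 1)" by (elim imageE) auto
  qed
  from choice[OF this] obtain c where c: "\<forall>n. c n \<in> C \<and> norm (c n) < d + inverse (real n + 1)"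
    by blast
  hence cC: "\<And>n. c n \<in> C" and cn: "\<And>n. norm (c n) < d + inverse (real n + 1)" by auto
  have "Cauchy c"
  proof (rule cauchy_helper[where K = "4 * d + 2" and Mz = 0])
    fix m n :: nat
    let ?a = "inverse (real m + 1)" and ?b = "inverse (real n + 1)"
    have a1: "?a \<le> 1" "?a \<ge> 0" and b1: "?b \<le> 1" "?b \<ge> 0" by (auto simp: field_simps)
    have mid: "(1/2) *\<^sub>R c m + (1/2) *\<^sub>R c n \<in> C"
      using convexD[OF cv cC cC, of "1/2" "1/2"] by simp
    have "d \<le> norm ((1/2) *\<^sub>R c m + (1/2) *\<^sub>R c n)" using dle mid by blast
    also have "(1/2) *\<^sub>R c m + (1/2) *\<^sub>R c n = (1/2) *\<^sub>R (c m + c n)" by (simp add: scaleR_add_right)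
    finally have "2 * d \<le> norm (c m + c n)" by simp
    hence "(2 * d)\<^sup>2 \<le> (norm (c m + c n))\<^sup>2" using d0 by (intro power_mono) auto
    hence s: "4 * d\<^sup>2 \<le> (norm (c m + c n))\<^sup>2" by (simp add: power_mult_distrib)
    have pm: "(norm (c m))\<^sup>2 \<le> (d + ?a)\<^sup>2" using cn[of m] by (intro power_mono) auto
    have pn: "(norm (c n))\<^sup>2 \<le> (d + ?b)\<^sup>2" using cn[of n] by (intro power_mono) auto
    have "(dist (c m) (c n))\<^sup>2 = 2 * (norm (c m))\<^sup>2 + 2 * (norm (c n))\<^sup>2 - (norm (c m + c n))\<^sup>2"
      by (simp add: dist_norm parallelogram_eq)
    also have "\<dots> \<le> 2 * (d + ?a)\<^sup>2 + 2 * (d + ?b)\<^sup>2 - 4 * d\<^sup>2" using pm pn s by linarith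
    also have "\<dots> = (4 * d) * (?a + ?b) + 2 * ?a * ?a + 2 * ?b * ?b" by (simp add: power2_eq_square algebra_simps)
    also have "\<dots> \<le> (4 * d) * (?a + ?b) + 2 * ?a + 2 * ?b"
    proof -
      have "?a * ?a \<le> ?a" using a1 mult_left_le_one_le[of ?a ?a] by blast
      moreover have "?b * ?b \<le> ?b" using b1 mult_left_le_one_le[of ?b ?b] by blast
      ultimately show ?thesis by linarith
    qed
    also have "\<dots> = (4 * d + 2) * (?a + ?b)" by (simp add: algebra_simps)
    finally show "(dist (c m) (c n))\<^sup>2 \<le> (4 * d + 2) * (?a + ?b)" .
  qed
  then obtain m where lim: "c \<longlonglongrightarrow> m" using Cauchy_convergent_iff convergent_def by blast
  have mC: "m \<in> C" using closed_sequentially[OF cl] cC lim by blast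
  have "norm m \<le> d"
  proof (rule tendsto_le[OF trivial_limit_sequentially _ tendsto_norm[OF lim]])
    show "((\<lambda>n. d + inverse (real n + 1)) \<longlongrightarrow> d) sequentially"
      using LIMSEQ_inverse_real_of_nat_add[of d] by (simp add: add.commute)
    show "\<forall>\<^sub>F n in sequentially. norm (c n) \<le> d + inverse (real n + 1)"
      using cn by (simp add: less_imp_le)
  qed
  thus ?thesis using mC dle by (meson order_trans)
qed

lemma min_norm_var:
  fixes C :: "'a::real_inner set"
  assumes cv: "convex C" and mC: "m \<in> C" and mn: "\<forall>u\<in>C. norm m \<le> norm u" and uC: "u \<in> C"
  shows "inner m (u - m) \<ge> 0"
proof (rule ccontr)
  assume "\<not> ?thesis"
  hence neg: "inner m (u - m) < 0" by simp
  define w where "w = u - m"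
  have w0: "inner w w > 0" using neg unfolding w_def
    by (metis inner_eq_zero_iff inner_gt_zero_iff inner_zero_right less_irrefl)
  define s where "s = min 1 (- inner m w / inner w w)"
  have "- inner m w / inner w w > 0" using neg w0 unfolding w_def by (intro divide_pos_pos) auto
  hence s0: "s > 0" and s1: "s \<le> 1" unfolding s_def by auto
  have "s \<le> - inner m w / inner w w" unfolding s_def by simp
  hence "s * inner w w \<le> (- inner m w / inner w w) * inner w w" by (rule mult_right_mono) (use w0 in auto)
  also have "(- inner m w / inner w w) * inner w w = - inner m w" using w0 by simp
  finally have sw: "s * inner w w \<le> - inner m w" .
  have "m + s *\<^sub>R w \<in> C"
  proof -
    have "(1 - s) *\<^sub>R m + s *\<^sub>R u \<in> C" using cv mC uC s0 s1 unfolding convex_def by auto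
    also have "(1 - s) *\<^sub>R m + s *\<^sub>R u = m + s *\<^sub>R w" unfolding w_def by (simp add: algebra_simps)
    finally show ?thesis .
  qed
  hence "norm m \<le> norm (m + s *\<^sub>R w)" using mn by blast
  hence "(norm m)\<^sup>2 \<le> (norm (m + s *\<^sub>R w))\<^sup>2" by (simp add: power_mono)
  hence "0 \<le> 2 * s * inner m w + s * s * inner w w"
    by (simp add: power2_norm_eq_inner inner_simps inner_commute algebra_simps)
  hence "0 \<le> s * (2 * inner m w + s * inner w w)" by (simp add: algebra_simps)
  hence "0 \<le> 2 * inner m w + s * inner w w" using s0 by (simp add: zero_le_mult_iff)
  moreover have "inner m w < 0" using neg unfolding w_def .
  ultimately show False using sw by linarith
qed

lemma min_norm_unique:
  fixes C :: "'a::real_inner set"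
  assumes cv: "convex C" and "m1 \<in> C" "\<forall>u\<in>C. norm m1 \<le> norm u" "m2 \<in> C" "\<forall>u\<in>C. norm m2 \<le> norm u"
  shows "m1 = m2"
proof -
  have "inner m1 (m2 - m1) \<ge> 0" "inner m2 (m1 - m2) \<ge> 0" using min_norm_var assms by blast+
  hence "inner (m1 - m2) (m1 - m2) \<le> 0" by (simp add: inner_simps inner_commute)
  thus ?thesis by (metis antisym inner_ge_zero inner_eq_zero_iff right_minus_eq)
qed


lemma inv_eps_growth:
  fixes eps eps' :: "real \<Rightarrow> real"
  assumes d1: "\<And>t. t \<ge> T \<Longrightarrow> (eps has_real_derivative eps' t) (at t)"
    and pos: "\<And>t. t \<ge> T \<Longrightarrow> eps t > 0"
    and c1: "\<And>t. t \<ge> T \<Longrightarrow> (eps t)\<^sup>2 + eps' t \<ge> 0"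
    and st: "T \<le> s" "s \<le> t"
  shows "1 / eps t - 1 / eps s \<le> t - s"
proof -
  have "(\<lambda>t. 1 / eps t - t) t \<le> (\<lambda>t. 1 / eps t - t) s"
  proof (rule DERIV_nonpos_imp_nonincreasing[OF st(2)])
    fix x assume x: "s \<le> x" "x \<le> t"
    hence xT: "x \<ge> T" using st by simp
    have ex: "eps x > 0" using pos xT by simp
    have "((\<lambda>t. 1 / eps t - t) has_real_derivative (- eps' x / (eps x)\<^sup>2 - 1)) (at x)"
      using d1[OF xT] ex
      by (auto intro!: derivative_eq_intros simp: power2_eq_square field_simps)
    moreover have "- eps' x / (eps x)\<^sup>2 - 1 \<le> 0"
    proof -
      have "- eps' x / (eps x)\<^sup>2 \<le> (eps x)\<^sup>2 / (eps x)\<^sup>2"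
        by (rule divide_right_mono) (use c1[OF xT] in auto)
      also have "(eps x)\<^sup>2 / (eps x)\<^sup>2 = 1" using ex by simp
      finally have "- eps' x / (eps x)\<^sup>2 \<le> 1" .
      thus ?thesis by simp
    qed
    ultimately show "\<exists>y. ((\<lambda>t. 1 / eps t - t) has_real_derivative y) (at x) \<and> y \<le> 0" by blast
  qed
  thus ?thesis by simp
qed

lemma eps_lower:
  fixes eps eps' :: "real \<Rightarrow> real"
  assumes d1: "\<And>t. t \<ge> T \<Longrightarrow> (eps has_real_derivative eps' t) (at t)"
    and pos: "\<And>t. t \<ge> T \<Longrightarrow> eps t > 0"
    and c1: "\<And>t. t \<ge> T \<Longrightarrow> (eps t)\<^sup>2 + eps' t \<ge> 0"
    and t: "t \<ge> T"
  shows "eps t \<ge> 1 / ((1 / eps T - T) + t)" and "(1 / eps T - T) + t > 0"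
proof -
  have "1 / eps t - 1 / eps T \<le> t - T" using inv_eps_growth[OF d1 pos c1 order_refl t] by blast
  hence le: "1 / eps t \<le> (1 / eps T - T) + t" by simp
  have "1 / eps t > 0" using pos t by simp
  thus "(1 / eps T - T) + t > 0" using le by linarith
  show "eps t \<ge> 1 / ((1 / eps T - T) + t)"
  proof -
    have "inverse ((1 / eps T - T) + t) \<le> inverse (1 / eps t)"
      by (rule le_imp_inverse_le[OF le]) (use pos[OF t] in simp)
    thus ?thesis by (simp add: inverse_eq_divide)
  qed
qed

lemma eps_deriv_small:
  fixes eps eps' eps'' :: "real \<Rightarrow> real"
  assumes d1: "\<And>t. t \<ge> T \<Longrightarrow> (eps has_real_derivative eps' t) (at t)"
    and d2: "\<And>t. t \<ge> T \<Longrightarrow> (eps' has_real_derivative eps'' t) (at t)"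
    and pos: "\<And>t. t \<ge> T \<Longrightarrow> eps t > 0"
    and lim: "(eps \<longlongrightarrow> 0) at_top"
    and c1: "\<And>t. t \<ge> T \<Longrightarrow> (eps t)\<^sup>2 + eps' t \<ge> 0"
    and c2: "\<And>t. t \<ge> T \<Longrightarrow> 2 * eps t * eps' t + eps'' t \<le> 0"
    and k: "k > 0"
  shows "eventually (\<lambda>t. \<bar>eps' t\<bar> \<le> k * eps t) at_top"
proof -
  define g where "g t = (eps t)\<^sup>2 + eps' t" for t
  have g_anti: "g t \<le> g s" if "T \<le> s" "s \<le> t" for s t
  proof (rule DERIV_nonpos_imp_nonincreasing[OF that(2)])
    fix x assume x: "s \<le> x" "x \<le> t"
    hence xT: "x \<ge> T" using that by simp
    have "(g has_real_derivative (2 * eps x * eps' x + eps'' x)) (at x)"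
      unfolding g_def using d1[OF xT] d2[OF xT]
      by (auto intro!: derivative_eq_intros simp: power2_eq_square field_simps)
    thus "\<exists>y. (g has_real_derivative y) (at x) \<and> y \<le> 0" using c2[OF xT] by blast
  qed
  have ev_small: "eventually (\<lambda>t. eps t \<le> k / 8) at_top"
    using order_tendstoD(2)[OF lim, of "k/8"] k by (auto elim: eventually_mono)
  have main: "g t < k * eps t" if tT: "t \<ge> T + 2 / k" and small: "eps t \<le> k / 8" for t
  proof (rule ccontr)
    assume "\<not> g t < k * eps t"
    hence gt: "g t \<ge> k * eps t" by simp
    define e where "e = eps t"
    define t1 where "t1 = t - 2 / k"
    have t1T: "t1 \<ge> T" using tT unfolding t1_def by simp
    have t1t: "t1 < t" unfolding t1_def using k by simp
    have tTT: "t \<ge> T" using t1T t1t by simp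
    have e0: "e > 0" unfolding e_def using pos tTT by simp
    have bnd: "eps \<tau> \<le> 2 * e" if "t1 \<le> \<tau>" "\<tau> \<le> t" for \<tau>
    proof -
      have \<tau>T: "\<tau> \<ge> T" using that t1T by simp
      have "1 / eps t - 1 / eps \<tau> \<le> t - \<tau>" using inv_eps_growth[OF d1 pos c1 \<tau>T that(2)] by blast
      also have "\<dots> \<le> 2 / k" using that unfolding t1_def by simp
      also have "\<dots> \<le> 1 / (2 * e)" using small k e0 unfolding e_def by (simp add: field_simps)
      finally have "1 / e - 1 / (2 * e) \<le> 1 / eps \<tau>" unfolding e_def by linarith
      moreover have "1 / e - 1 / (2 * e) = 1 / (2 * e)" using e0 by (simp add: field_simps)
      ultimately have "1 / (2 * e) \<le> 1 / eps \<tau>" by simp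
      hence "inverse (1 / eps \<tau>) \<le> inverse (1 / (2 * e))"
        by (rule le_imp_inverse_le) (use e0 in simp)
      thus ?thesis by (simp add: inverse_eq_divide)
    qed
    obtain \<xi> where xi: "t1 < \<xi>" "\<xi> < t" "eps t - eps t1 = (t - t1) * eps' \<xi>"
      using MVT2[OF t1t, of eps eps'] d1 t1T by auto
    have xiT: "\<xi> \<ge> T" using xi t1T by simp
    have "eps' \<xi> = g \<xi> - (eps \<xi>)\<^sup>2" unfolding g_def by simp
    also have "g \<xi> \<ge> g t" using g_anti xiT xi by simp
    moreover have "(eps \<xi>)\<^sup>2 \<le> (2 * e)\<^sup>2" using bnd[of \<xi>] xi pos[OF xiT] by (intro power_mono) auto
    ultimately have "eps' \<xi> \<ge> k * e - 4 * e\<^sup>2" using gt unfolding e_def by (simp add: power_mult_distrib)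
    moreover have "4 * e\<^sup>2 \<le> k * e / 2" using small e0 unfolding e_def by (simp add: power2_eq_square field_simps)
    ultimately have "eps' \<xi> \<ge> k * e / 2" by simp
    hence "(2 / k) * eps' \<xi> \<ge> (2 / k) * (k * e / 2)"
      by (rule mult_left_mono) (use k in auto)
    moreover have "t - t1 = 2 / k" unfolding t1_def by simp
    ultimately have "(t - t1) * eps' \<xi> \<ge> (2 / k) * (k * e / 2)" by simp
    hence "eps t - eps t1 \<ge> e" using xi k by simp
    hence "eps t1 \<le> 0" unfolding e_def by simp
    thus False using pos[OF t1T] by simp
  qed
  have ev_small2: "eventually (\<lambda>t. eps t \<le> k) at_top"
    using ev_small k by (auto elim: eventually_mono)
  show ?thesis
    using ev_small ev_small2 eventually_ge_at_top[of "T + 2 / k"]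
  proof eventually_elim
    case (elim t)
    have "2 / k > 0" using k by simp
    hence tT: "t \<ge> T" using elim by linarith
    have "g t < k * eps t" using main[of t] elim by simp
    moreover have "eps' t \<le> g t" unfolding g_def by simp
    ultimately have up: "eps' t < k * eps t" by linarith
    have "- eps' t \<le> (eps t)\<^sup>2" using c1[OF tT] by simp
    also have "\<dots> \<le> k * eps t" using elim pos[OF tT] by (simp add: power2_eq_square mult_right_mono)
    finally show ?case using up by simp
  qed
qed


lemma deriv_inner_self:
  fixes f :: "real \<Rightarrow> 'a::real_inner"
  assumes "(f has_vector_derivative f') (at t)"
  shows "((\<lambda>t. inner (f t) (f t)) has_real_derivative 2 * inner f' (f t)) (at t)"
proof -
  from assms have d: "(f has_derivative (\<lambda>h. h *\<^sub>R f')) (at t)" by (simp add: has_vector_derivative_def)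
  have "((\<lambda>t. inner (f t) (f t)) has_derivative (\<lambda>h. inner (f t) (h *\<^sub>R f') + inner (h *\<^sub>R f') (f t))) (at t)"
    by (rule has_derivative_inner[OF d d])
  moreover have "(\<lambda>h. inner (f t) (h *\<^sub>R f') + inner (h *\<^sub>R f') (f t)) = (*) (2 * inner f' (f t))"
    by (auto simp: inner_commute algebra_simps)
  ultimately show ?thesis by (simp add: has_field_derivative_def)
qed

lemma shift_vderiv:
  fixes z :: "real \<Rightarrow> 'a::real_normed_vector"
  assumes "(z has_vector_derivative v) (at (t + s))"
  shows "((\<lambda>t. z (t + s)) has_vector_derivative v) (at t)"
proof -
  have "((\<lambda>t. t + s) has_vector_derivative 1) (at t)"
    by (auto intro!: derivative_eq_intros simp: has_real_derivative_iff_has_vector_derivative[symmetric])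
  from vector_diff_chain_at[OF this] assms show ?thesis by (simp add: o_def)
qed

lemma deriv_bound_from_diff:
  fixes z :: "real \<Rightarrow> 'a::real_normed_vector"
  assumes d: "(z has_vector_derivative v) (at t)"
    and b: "\<And>s. 0 < s \<Longrightarrow> s \<le> 1 \<Longrightarrow> norm (z (t + s) - z t) \<le> s * \<beta>"
  shows "norm v \<le> \<beta>"
proof (rule field_le_epsilon)
  fix e :: real assume e: "e > 0"
  from d have "(z has_derivative (\<lambda>h. h *\<^sub>R v)) (at t)" by (simp add: has_vector_derivative_def)
  then obtain d where d0: "d > 0" and dd: "\<And>y. norm (y - t) < d \<Longrightarrow> norm (z y - z t - (y - t) *\<^sub>R v) \<le> e * norm (y - t)"
    unfolding has_derivative_at_alt using e by blast
  define s where "s = min (d / 2) 1"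
  have s0: "s > 0" and s1: "s \<le> 1" and sd: "s < d" using d0 unfolding s_def by auto
  have "norm (z (t + s) - z t - s *\<^sub>R v) \<le> e * s" using dd[of "t + s"] s0 sd by simp
  moreover have "norm (s *\<^sub>R v) \<le> norm (z (t + s) - z t) + norm (z (t + s) - z t - s *\<^sub>R v)"
    by (metis add.commute diff_add_cancel norm_minus_commute norm_triangle_ineq4 add_diff_cancel_left')
  ultimately have "s * norm v \<le> s * \<beta> + e * s" using b[OF s0 s1] s0 by simp
  hence "s * norm v \<le> s * (\<beta> + e)" by (simp add: algebra_simps)
  thus "norm v \<le> \<beta> + e" using s0 by simp
qed

lemma minty:
  fixes F :: "'a::real_inner \<Rightarrow> 'a"
  assumes cont: "\<And>u. isCont F u" and h: "\<And>y. inner (F y) (y - m) \<ge> 0"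
  shows "F m = 0"
proof -
  define d where "d = F m"
  have le: "inner (F (m - s *\<^sub>R d)) d \<le> 0" if "s > 0" for s
  proof -
    have "0 \<le> inner (F (m - s *\<^sub>R d)) ((m - s *\<^sub>R d) - m)" by (rule h)
    also have "\<dots> = - s * inner (F (m - s *\<^sub>R d)) d" by (simp add: inner_simps)
    finally show ?thesis using that by (simp add: mult_le_0_iff)
  qed
  have lim1: "((\<lambda>s. m - s *\<^sub>R d) \<longlongrightarrow> m) (at_right 0)"
    by (auto intro!: tendsto_eq_intros)
  have lim2: "((\<lambda>s. F (m - s *\<^sub>R d)) \<longlongrightarrow> F m) (at_right 0)"
    using isCont_tendsto_compose[OF cont lim1] .
  have lim3: "((\<lambda>s. inner (F (m - s *\<^sub>R d)) d) \<longlongrightarrow> inner (F m) d) (at_right 0)"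
    by (intro tendsto_intros lim2)
  have "inner (F m) d \<le> 0"
    by (rule tendsto_upperbound[OF lim3]) (auto simp: eventually_at_right_less le intro: eventually_mono[OF eventually_at_right_less] trivial_limit_at_right_real)
  thus ?thesis unfolding d_def by (metis antisym inner_ge_zero inner_eq_zero_iff)
qed

lemma kset_closed:
  fixes F :: "'a::real_inner \<Rightarrow> 'a"
  shows "closed {u. \<forall>y. inner (F y) (y - u) \<ge> g y}"
  by (intro closed_Collect_all closed_Collect_le continuous_intros)

lemma kset_convex:
  fixes F :: "'a::real_inner \<Rightarrow> 'a"
  shows "convex {u. \<forall>y. inner (F y) (y - u) \<ge> g y}"
proof (rule convexI)
  fix u v :: 'a and a b :: real
  assume u: "u \<in> {u. \<forall>y. inner (F y) (y - u) \<ge> g y}" and v: "v \<in> {u. \<forall>y. inner (F y) (y - u) \<ge> g y}"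
    and a: "0 \<le> a" and b: "0 \<le> b" and ab: "a + b = 1"
  show "a *\<^sub>R u + b *\<^sub>R v \<in> {u. \<forall>y. inner (F y) (y - u) \<ge> g y}"
  proof (clarify)
    fix y
    have "y - (a *\<^sub>R u + b *\<^sub>R v) = a *\<^sub>R (y - u) + b *\<^sub>R (y - v)"
      using ab by (simp add: algebra_simps flip: scaleR_add_left)
    hence "inner (F y) (y - (a *\<^sub>R u + b *\<^sub>R v)) = a * inner (F y) (y - u) + b * inner (F y) (y - v)"
      by (simp add: inner_simps)
    also have "\<dots> \<ge> a * g y + b * g y"
      using u v a b by (intro add_mono mult_left_mono) auto
    finally show "g y \<le> inner (F y) (y - (a *\<^sub>R u + b *\<^sub>R v))" using ab by (simp add: algebra_simps flip: distrib_right)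
  qed
qed

lemma selection:
  fixes K :: "nat \<Rightarrow> 'a::{real_inner,complete_space} set"
  assumes cl: "\<And>n. closed (K n)" and cv: "\<And>n. convex (K n)"
    and anti: "\<And>n. K (Suc n) \<subseteq> K n" and pK: "\<And>n. p \<in> K n"
    and mK: "\<And>n. mm n \<in> K n" and mmin: "\<And>n u. u \<in> K n \<Longrightarrow> norm (mm n) \<le> norm u"
  shows "\<exists>m. mm \<longlonglongrightarrow> m \<and> (\<forall>n. m \<in> K n) \<and> norm m \<le> norm p"
proof -
  have anti_le: "K k \<subseteq> K n" if "n \<le> k" for n k
    using lift_Suc_antimono_le[of K, OF anti that] by simp
  have nmono: "norm (mm n) \<le> norm (mm k)" if "n \<le> k" for n k
    using mmin[of "mm k" n] mK[of k] anti_le[OF that] by blast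
  have np: "norm (mm n) \<le> norm p" for n using mmin pK by blast
  define a where "a n = (norm (mm n))\<^sup>2" for n
  have inc: "incseq a" unfolding a_def incseq_def using nmono by (simp add: power_mono)
  have bdd: "bdd_above (range a)" unfolding a_def
    by (rule bdd_aboveI[of _ "(norm p)\<^sup>2"]) (use np in \<open>auto intro: power_mono\<close>)
  have "convergent a" using LIMSEQ_incseq_SUP[OF bdd inc] by (auto simp: convergent_def)
  hence ca: "Cauchy a" by (simp add: Cauchy_convergent_iff)
  have dist_le: "(dist (mm k) (mm n))\<^sup>2 \<le> a k - a n" if "n \<le> k" for n k
  proof -
    have "inner (mm n) (mm k - mm n) \<ge> 0"
      using min_norm_var[OF cv[of n] mK[of n], of "mm k"] mmin[of _ n] mK[of k] anti_le[OF that] by blast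
    thus ?thesis unfolding a_def dist_norm
      by (simp add: power2_norm_eq_inner inner_simps inner_commute)
  qed
  have "Cauchy mm"
  proof (rule metric_CauchyI)
    fix e :: real assume e: "e > 0"
    obtain M where M: "\<And>m n. m \<ge> M \<Longrightarrow> n \<ge> M \<Longrightarrow> dist (a m) (a n) < e\<^sup>2"
      using metric_CauchyD[OF ca, of "e\<^sup>2"] e by auto
    have "dist (mm m) (mm n) < e" if "m \<ge> M" "n \<ge> M" for m n
    proof -
      have "(dist (mm m) (mm n))\<^sup>2 < e\<^sup>2"
      proof (cases "n \<le> m")
        case True
        have "(dist (mm m) (mm n))\<^sup>2 \<le> a m - a n" using dist_le[OF True] .
        also have "\<dots> < e\<^sup>2" using M[OF that] by (simp add: dist_real_def)
        finally show ?thesis .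
      next
        case False
        have "(dist (mm m) (mm n))\<^sup>2 = (dist (mm n) (mm m))\<^sup>2" by (simp add: dist_commute)
        also have "\<dots> \<le> a n - a m" using dist_le False by simp
        also have "\<dots> < e\<^sup>2" using M[OF that] by (simp add: dist_real_def)
        finally show ?thesis .
      qed
      thus ?thesis using e by (simp add: power_less_imp_less_base)
    qed
    thus "\<exists>M. \<forall>m\<ge>M. \<forall>n\<ge>M. dist (mm m) (mm n) < e" by blast
  qed
  then obtain m where lim: "mm \<longlonglongrightarrow> m" using Cauchy_convergent_iff convergent_def by blast
  have mK': "m \<in> K n" for n
  proof (rule Lim_in_closed_set[OF cl _ trivial_limit_sequentially lim])
    show "\<forall>\<^sub>F k in sequentially. mm k \<in> K n"
      using eventually_ge_at_top[of n] by eventually_elim (use mK anti_le in blast)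
  qed
  have "norm m \<le> norm p"
    by (rule tendsto_upperbound[OF tendsto_norm[OF lim]]) (use np in auto)
  thus ?thesis using lim mK' by blast
qed


theorem tikhonov_flow:
  fixes F :: "'h::{real_inner,complete_space} \<Rightarrow> 'h" and z z' :: "real \<Rightarrow> 'h"
    and eps eps' eps'' :: "real \<Rightarrow> real" and T :: real and p :: 'h
  assumes mono: "\<And>u v. inner (F u - F v) (u - v) \<ge> 0"
    and cont: "\<And>u. isCont F u"
    and pZ: "F p = 0" and pmin: "\<And>u. F u = 0 \<Longrightarrow> norm p \<le> norm u"
    and zd: "\<And>t. t \<ge> T \<Longrightarrow> (z has_vector_derivative z' t) (at t)"
    and z'c: "continuous_on {T..} z'"
    and eq: "\<And>t. t \<ge> T \<Longrightarrow> z' t = - (F (z t) + eps t *\<^sub>R z t)"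
    and d1: "\<And>t. t \<ge> T \<Longrightarrow> (eps has_real_derivative eps' t) (at t)"
    and d2: "\<And>t. t \<ge> T \<Longrightarrow> (eps' has_real_derivative eps'' t) (at t)"
    and pos: "\<And>t. t \<ge> T \<Longrightarrow> eps t > 0"
    and lim: "(eps \<longlongrightarrow> 0) at_top"
    and c1: "\<And>t. t \<ge> T \<Longrightarrow> (eps t)\<^sup>2 + eps' t \<ge> 0"
    and c2: "\<And>t. t \<ge> T \<Longrightarrow> 2 * eps t * eps' t + eps'' t \<le> 0"
  shows "(z \<longlongrightarrow> p) at_top"
proof -
  define C where "C = 1 / eps T - T"
  have epsl: "eps t \<ge> 1 / (C + t)" and Cpos: "C + t > 0" if "t \<ge> T" for t
    using eps_lower[OF d1 pos c1 that] unfolding C_def by auto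
  have Fmono0: "inner (F u) (u - p) \<ge> 0" for u using mono[of u p] pZ by simp
  define h where "h t = inner (z t - p) (z t - p)" for t
  define h' where "h' t = 2 * inner (z' t) (z t - p)" for t
  have hd: "(h has_real_derivative h' t) (at t)" if "t \<ge> T" for t
  proof -
    have "((\<lambda>t. z t - p) has_vector_derivative z' t) (at t)"
      using has_vector_derivative_diff[OF zd[OF that] has_vector_derivative_const[of p]] by simp
    thus ?thesis unfolding h_def h'_def by (rule deriv_inner_self)
  qed
  have hn: "h t = (norm (z t - p))\<^sup>2" for t unfolding h_def by (simp add: power2_norm_eq_inner)
  have key: "h' t \<le> - 2 * eps t * (h t + inner p (z t - p))" if "t \<ge> T" for t
  proof -
    have "inner (z' t) (z t - p) = - inner (F (z t)) (z t - p) - eps t * inner (z t) (z t - p)"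
      by (subst eq[OF that]) (simp add: inner_simps algebra_simps)
    also have "\<dots> \<le> - eps t * inner (z t) (z t - p)" using Fmono0[of "z t"] by simp
    also have "inner (z t) (z t - p) = h t + inner p (z t - p)" unfolding h_def by (simp add: inner_simps inner_commute)
    finally show ?thesis unfolding h'_def by simp
  qed
  define H0 where "H0 = max (h T) ((norm p)\<^sup>2)"
  have hbound: "h t \<le> H0" if "t \<ge> T" for t
  proof -
    have "(\<lambda>t. h t - (norm p)\<^sup>2) t \<le> max ((\<lambda>t. h t - (norm p)\<^sup>2) T) 0"
    proof (rule stay_below[where \<phi> = "\<lambda>t. h t - (norm p)\<^sup>2" and \<phi>' = h' and T = T])
      fix t assume t: "t \<ge> T"
      show "((\<lambda>t. h t - (norm p)\<^sup>2) has_real_derivative h' t) (at t)"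
        using hd[OF t] by (auto intro!: derivative_eq_intros)
    next
      fix t assume t: "t \<ge> T" and gt: "h t - (norm p)\<^sup>2 > 0"
      have "(norm p)\<^sup>2 < (norm (z t - p))\<^sup>2" using gt hn by simp
      hence np: "norm p \<le> norm (z t - p)" by (simp add: power_less_imp_less_base less_imp_le)
      have "inner p (z t - p) \<ge> - (norm p * norm (z t - p))"
        using Cauchy_Schwarz_ineq2[of p "z t - p"] by (simp add: abs_le_iff)
      moreover have "norm p * norm (z t - p) \<le> h t" unfolding hn power2_eq_square
        using np by (simp add: mult_right_mono)
      ultimately have "h t + inner p (z t - p) \<ge> 0" by linarith
      hence "- 2 * eps t * (h t + inner p (z t - p)) \<le> 0" using pos[OF t] by (simp add: mult_nonneg_nonneg)
      thus "h' t \<le> 0" using key[OF t] by linarith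
    qed (use that in auto)
    thus ?thesis unfolding H0_def by simp
  qed
  define R where "R = norm p + sqrt H0 + 1"
  have H00: "H0 \<ge> 0" unfolding H0_def by (simp add: le_max_iff_disj)
  have R0: "R > 0" unfolding R_def using H00 by (simp add: add_nonneg_pos)
  have zR: "norm (z t) \<le> R" if "t \<ge> T" for t
  proof -
    have "norm (z t - p) = sqrt (h t)" unfolding hn by simp
    also have "\<dots> \<le> sqrt H0" using hbound[OF that] by simp
    finally have "norm (z t - p) \<le> sqrt H0" .
    moreover have "norm (z t) \<le> norm p + norm (z t - p)" by (metis norm_triangle_sub add.commute)
    ultimately show ?thesis unfolding R_def by linarith
  qed
  have S3: "eventually (\<lambda>t. norm (z' t) \<le> sqrt \<eta>) at_top" if \<eta>: "\<eta> > 0" for \<eta>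
  proof -
    define \<kappa> where "\<kappa> = sqrt (\<eta> / 8) / R"
    have \<kappa>0: "\<kappa> > 0" unfolding \<kappa>_def using \<eta> R0 by simp
    have kk: "4 * (\<kappa> * R)\<^sup>2 = \<eta> / 2" unfolding \<kappa>_def using \<eta> R0 by simp
    have "eventually (\<lambda>t. \<bar>eps' t\<bar> \<le> \<kappa> * eps t) at_top"
      by (rule eps_deriv_small[OF d1 d2 pos lim c1 c2 \<kappa>0])
    moreover have "eventually (\<lambda>t. eps t \<le> 1/2) at_top"
      using order_tendstoD(2)[OF lim, of "1/2"] by (auto elim: eventually_mono)
    moreover have "eventually (\<lambda>t. t \<ge> T) at_top" by (rule eventually_ge_at_top)
    ultimately have "eventually (\<lambda>t. \<bar>eps' t\<bar> \<le> \<kappa> * eps t \<and> eps t \<le> 1/2 \<and> t \<ge> T) at_top"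
      by eventually_elim auto
    then obtain T3 where T3: "\<And>t. t \<ge> T3 \<Longrightarrow> \<bar>eps' t\<bar> \<le> \<kappa> * eps t \<and> eps t \<le> 1/2 \<and> t \<ge> T"
      unfolding eventually_at_top_linorder by blast
    have T3T: "T3 \<ge> T" using T3[of T3] by simp
    have dEps: "\<bar>eps (t + s) - eps t\<bar> \<le> 2 * \<kappa> * s * eps (t + s)"
      if t: "t \<ge> T3" and s: "0 < s" "s \<le> 1" for t s
    proof -
      have ts: "t < t + s" using s by simp
      obtain \<xi> where xi: "t < \<xi>" "\<xi> < t + s" "eps (t + s) - eps t = (t + s - t) * eps' \<xi>"
        using MVT2[OF ts, of eps eps'] d1 T3 t by (smt (verit))
      have xT: "\<xi> \<ge> T3" using xi t by simp
      have eb: "eps \<xi> \<le> 2 * eps (t + s)"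
      proof -
        have pts: "eps (t + s) > 0" "eps \<xi> > 0" using pos T3 t xT s by auto
        have "1 / eps (t + s) - 1 / eps \<xi> \<le> t + s - \<xi>"
          using inv_eps_growth[OF d1 pos c1, where s = \<xi> and t = "t + s"] xT T3[of \<xi>] xi by auto
        also have "\<dots> \<le> 1" using xi s by simp
        finally have "1 / eps (t + s) - 1 \<le> 1 / eps \<xi>" by simp
        moreover have "1 / (2 * eps (t + s)) \<le> 1 / eps (t + s) - 1"
        proof -
          have "eps (t + s) \<le> 1/2" using T3[of "t + s"] t s by simp
          hence "1 \<le> 1 / (2 * eps (t + s))" using pts by (simp add: field_simps)
          moreover have "1 / eps (t + s) = 2 * (1 / (2 * eps (t + s)))" using pts by simp
          ultimately show ?thesis by linarith
        qed
        ultimately have "1 / (2 * eps (t + s)) \<le> 1 / eps \<xi>" by linarith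
        hence "inverse (1 / eps \<xi>) \<le> inverse (1 / (2 * eps (t + s)))"
          by (rule le_imp_inverse_le) (use pts in simp)
        thus ?thesis by (simp add: inverse_eq_divide)
      qed
      have "\<bar>eps (t + s) - eps t\<bar> = s * \<bar>eps' \<xi>\<bar>" using xi s by (simp add: abs_mult)
      also have "\<dots> \<le> s * (\<kappa> * eps \<xi>)" using T3[OF xT] s by (intro mult_left_mono) auto
      also have "\<dots> \<le> s * (\<kappa> * (2 * eps (t + s)))" using eb s \<kappa>0 by (intro mult_left_mono) auto
      finally show ?thesis by (simp add: algebra_simps)
    qed
    have "compact (z' ` {T3..T3+1})"
      by (rule compact_continuous_image) (use continuous_on_subset[OF z'c] T3T in auto)
    hence "bounded (z' ` {T3..T3+1})" by (rule compact_imp_bounded)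
    then obtain Bz where Bz0': "Bz > 0" and Bzb: "\<forall>y\<in>z' ` {T3..T3+1}. norm y \<le> Bz"
      unfolding bounded_pos by blast
    have Bz: "norm (z' x) \<le> Bz" if "x \<in> {T3..T3+1}" for x using Bzb that by blast
    have Bz0: "Bz \<ge> 0" using Bz0' by simp
    have phi0: "norm (z (T3 + s) - z T3) \<le> s * Bz" if s: "0 < s" "s \<le> 1" for s
    proof -
      have ts: "T3 < T3 + s" using s by simp
      have cz: "continuous_on {T3..T3 + s} z"
      proof (intro continuous_at_imp_continuous_on ballI)
        fix x assume "x \<in> {T3..T3 + s}"
        hence "x \<ge> T" using T3T by simp
        thus "isCont z x" using zd by (blast intro: has_vector_derivative_continuous)
      qed
      have dz: "\<And>x. T3 < x \<Longrightarrow> x < T3 + s \<Longrightarrow> (z has_derivative (\<lambda>h. h *\<^sub>R z' x)) (at x)"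
        using zd T3T unfolding has_vector_derivative_def by auto
      obtain x where x: "x \<in> {T3<..<T3 + s}" "norm (z (T3 + s) - z T3) \<le> norm ((T3 + s - T3) *\<^sub>R z' x)"
        using mvt_general[OF ts cz dz] by blast
      have "norm ((T3 + s - T3) *\<^sub>R z' x) = s * norm (z' x)" using s by simp
      also have "\<dots> \<le> s * Bz" using Bz[of x] x s by (intro mult_left_mono) auto
      finally show ?thesis using x(2) by linarith
    qed
    define C1 where "C1 = C + 1"
    have C1pos: "C1 + t > 0" if "t \<ge> T3" for t using Cpos[of t] that T3T unfolding C1_def by simp
    have bound: "(norm (z (t + s) - z t))\<^sup>2 \<le> s\<^sup>2 * \<eta> / 2 + s\<^sup>2 * Bz\<^sup>2 * (C1 + T3) / (C1 + t)"
      if s: "0 < s" "s \<le> 1" and t: "t \<ge> T3" for s t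
    proof -
      define D where "D t = z (t + s) - z t" for t
      define \<phi> where "\<phi> t = inner (D t) (D t)" for t
      define \<phi>' where "\<phi>' t = 2 * inner (z' (t + s) - z' t) (D t)" for t
      define c where "c = s\<^sup>2 * \<eta> / 2"
      have \<phi>n: "\<phi> t = (norm (D t))\<^sup>2" for t unfolding \<phi>_def by (simp add: power2_norm_eq_inner)
      have \<phi>d: "(\<phi> has_real_derivative \<phi>' t) (at t)" if "t \<ge> T3" for t
      proof -
        have "(D has_vector_derivative (z' (t + s) - z' t)) (at t)"
          unfolding D_def using that T3T s
          by (intro has_vector_derivative_diff shift_vderiv zd) auto
        thus ?thesis unfolding \<phi>_def \<phi>'_def by (rule deriv_inner_self)
      qed
      have \<phi>s: "\<phi>' t \<le> - (\<phi> t - c) / (C1 + t)" if tt: "t \<ge> T3" and gt: "\<phi> t > c" for t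
      proof -
        have tT: "t \<ge> T" using tt T3T by simp
        define a where "a = eps (t + s)"
        define \<Delta> where "\<Delta> = eps (t + s) - eps t"
        have a0: "a > 0" unfolding a_def using pos tT s by simp
        have aC: "a \<ge> 1 / (C1 + t)"
        proof -
          have "1 / (C + (t + s)) \<le> a" unfolding a_def using epsl[of "t + s"] tT s by simp
          moreover have "1 / (C1 + t) \<le> 1 / (C + (t + s))"
            using Cpos[of "t + s"] tT s unfolding C1_def by (intro divide_left_mono) (auto simp: mult_pos_pos)
          ultimately show ?thesis by linarith
        qed
        have \<Delta>b: "\<bar>\<Delta>\<bar> \<le> 2 * \<kappa> * s * a" unfolding \<Delta>_def a_def using dEps[OF tt s] .
        have zeq: "z' (t + s) - z' t = - (F (z (t + s)) - F (z t)) - (a *\<^sub>R D t + \<Delta> *\<^sub>R z t)"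
        proof -
          have e1: "z' t = - (F (z t) + eps t *\<^sub>R z t)" using eq tT by simp
          have e2: "z' (t + s) = - (F (z (t + s)) + eps (t + s) *\<^sub>R z (t + s))" using eq tT s by simp
          show ?thesis unfolding e1 e2 a_def \<Delta>_def D_def by (simp add: algebra_simps)
        qed
        have mon: "inner (F (z (t + s)) - F (z t)) (D t) \<ge> 0" unfolding D_def by (rule mono)
        have "inner (z' (t + s) - z' t) (D t) = - inner (F (z (t + s)) - F (z t)) (D t) - a * \<phi> t - \<Delta> * inner (z t) (D t)"
          unfolding zeq \<phi>_def by (simp add: inner_simps)
        also have "\<dots> \<le> - a * \<phi> t + \<bar>\<Delta>\<bar> * (R * norm (D t))"
        proof -
          have "- \<Delta> * inner (z t) (D t) \<le> \<bar>\<Delta>\<bar> * \<bar>inner (z t) (D t)\<bar>" by (simp add: abs_mult[symmetric])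
          also have "\<dots> \<le> \<bar>\<Delta>\<bar> * (norm (z t) * norm (D t))"
            by (intro mult_left_mono Cauchy_Schwarz_ineq2) auto
          also have "\<dots> \<le> \<bar>\<Delta>\<bar> * (R * norm (D t))"
            using zR[OF tT] by (intro mult_left_mono mult_right_mono) auto
          finally show ?thesis using mon by linarith
        qed
        finally have i1: "inner (z' (t + s) - z' t) (D t) \<le> - a * \<phi> t + \<bar>\<Delta>\<bar> * (R * norm (D t))" .
        have i2: "\<bar>\<Delta>\<bar> * (R * norm (D t)) \<le> (2 * \<kappa> * s * a) * (R * norm (D t))"
          using \<Delta>b R0 by (intro mult_right_mono) auto
        have i3: "(2 * \<kappa> * s * a) * (R * norm (D t)) \<le> a * (\<phi> t / 2 + 2 * (\<kappa> * R)\<^sup>2 * s\<^sup>2)"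
        proof -
          have "2 * (\<kappa> * s * R) * norm (D t) \<le> (norm (D t))\<^sup>2 / 2 + 2 * (\<kappa> * s * R)\<^sup>2"
          proof -
            define x where "x = norm (D t)"
            define y where "y = \<kappa> * s * R"
            have "0 \<le> (x - 2 * y)\<^sup>2" by simp
            also have "(x - 2 * y)\<^sup>2 = x\<^sup>2 - 4 * (y * x) + 4 * y\<^sup>2" by (simp add: power2_eq_square algebra_simps)
            finally have "2 * y * x \<le> x\<^sup>2 / 2 + 2 * y\<^sup>2" by simp
            thus ?thesis unfolding x_def y_def .
          qed
          hence "a * (2 * (\<kappa> * s * R) * norm (D t)) \<le> a * ((norm (D t))\<^sup>2 / 2 + 2 * (\<kappa> * s * R)\<^sup>2)"
            using a0 by (intro mult_left_mono) auto
          thus ?thesis unfolding \<phi>n by (simp add: algebra_simps power_mult_distrib)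
        qed
        from i1 i2 i3 have "inner (z' (t + s) - z' t) (D t) \<le> - a * \<phi> t + a * (\<phi> t / 2 + 2 * (\<kappa> * R)\<^sup>2 * s\<^sup>2)" by linarith
        hence "\<phi>' t \<le> - a * (\<phi> t - 4 * (\<kappa> * R)\<^sup>2 * s\<^sup>2)" unfolding \<phi>'_def by (simp add: algebra_simps)
        also have "4 * (\<kappa> * R)\<^sup>2 * s\<^sup>2 = c" unfolding c_def using kk by simp
        also have "- a * (\<phi> t - c) \<le> - (1 / (C1 + t)) * (\<phi> t - c)"
          using aC gt by (intro mult_right_mono) auto
        also have "- (1 / (C1 + t)) * (\<phi> t - c) = - (\<phi> t - c) / (C1 + t)" using C1pos[OF tt] by (simp add: field_simps)
        finally show ?thesis .
      qed
      have dec: "\<phi> t \<le> c + max (\<phi> T3 - c) 0 * (C1 + T3) / (C1 + t)"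
        by (rule decay_lemma[where \<phi>' = \<phi>', OF \<phi>d \<phi>s]) (use C1pos t in auto)
      have "\<phi> T3 \<le> s\<^sup>2 * Bz\<^sup>2"
      proof -
        have "\<phi> T3 = (norm (z (T3 + s) - z T3))\<^sup>2" unfolding \<phi>n D_def ..
        also have "\<dots> \<le> (s * Bz)\<^sup>2" using phi0[OF s] by (intro power_mono) auto
        finally show ?thesis by (simp add: power_mult_distrib)
      qed
      moreover have "\<phi> T3 \<ge> 0" unfolding \<phi>n by simp
      moreover have "c \<ge> 0" unfolding c_def using \<eta> by simp
      ultimately have "max (\<phi> T3 - c) 0 \<le> s\<^sup>2 * Bz\<^sup>2" by (simp add: max_def)
      hence "max (\<phi> T3 - c) 0 * (C1 + T3) / (C1 + t) \<le> s\<^sup>2 * Bz\<^sup>2 * (C1 + T3) / (C1 + t)"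
        using C1pos[of T3] C1pos[OF t] by (intro divide_right_mono mult_right_mono) auto
      with dec show ?thesis unfolding \<phi>n D_def c_def by linarith
    qed
    have "filterlim (\<lambda>t. C1 + t) at_top at_top"
      by (rule filterlim_tendsto_add_at_top[OF tendsto_const filterlim_ident])
    hence "((\<lambda>t. Bz\<^sup>2 * (C1 + T3) / (C1 + t)) \<longlongrightarrow> 0) at_top"
      by (intro tendsto_divide_0[OF tendsto_const] filterlim_at_top_imp_at_infinity)
    hence "eventually (\<lambda>t. Bz\<^sup>2 * (C1 + T3) / (C1 + t) < \<eta> / 2) at_top"
      using \<eta> by (intro order_tendstoD(2)) auto
    moreover have "eventually (\<lambda>t. t \<ge> T3) at_top" by (rule eventually_ge_at_top)
    ultimately show ?thesis
    proof eventually_elim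
      case (elim t)
      have tT: "t \<ge> T" using elim T3T by simp
      show ?case
      proof (rule deriv_bound_from_diff[OF zd[OF tT]])
        fix s :: real assume s: "0 < s" "s \<le> 1"
        have "(norm (z (t + s) - z t))\<^sup>2 \<le> s\<^sup>2 * \<eta> / 2 + s\<^sup>2 * (Bz\<^sup>2 * (C1 + T3) / (C1 + t))"
          using bound[OF s elim(2)] by (simp add: algebra_simps)
        also have "\<dots> \<le> s\<^sup>2 * \<eta> / 2 + s\<^sup>2 * (\<eta> / 2)"
        proof -
          have "Bz\<^sup>2 * (C1 + T3) / (C1 + t) \<le> \<eta> / 2" using elim(1) by linarith
          hence "s\<^sup>2 * (Bz\<^sup>2 * (C1 + T3) / (C1 + t)) \<le> s\<^sup>2 * (\<eta> / 2)"
            by (rule mult_left_mono) simp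
          thus ?thesis by linarith
        qed
        also have "\<dots> = (s * sqrt \<eta>)\<^sup>2"
        proof -
          have "(s * sqrt \<eta>)\<^sup>2 = s\<^sup>2 * \<eta>" using \<eta> by (simp add: power_mult_distrib)
          thus ?thesis by simp
        qed
        finally have sq: "(norm (z (t + s) - z t))\<^sup>2 \<le> (s * sqrt \<eta>)\<^sup>2" .
        show "norm (z (t + s) - z t) \<le> s * sqrt \<eta>"
          by (rule power2_le_imp_le[OF sq]) (use s \<eta> in simp)
      qed
    qed
  qed
  have S4: "eventually (\<lambda>t. norm (F (z t)) \<le> \<delta>) at_top" if \<delta>: "\<delta> > 0" for \<delta>
  proof -
    have "eventually (\<lambda>t. norm (z' t) \<le> sqrt ((\<delta> / 2)\<^sup>2)) at_top" using S3[of "(\<delta>/2)\<^sup>2"] \<delta> by simp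
    moreover have "eventually (\<lambda>t. eps t < \<delta> / (2 * R)) at_top"
      using order_tendstoD(2)[OF lim, of "\<delta> / (2 * R)"] \<delta> R0 by simp
    moreover have "eventually (\<lambda>t. t \<ge> T) at_top" by (rule eventually_ge_at_top)
    ultimately show ?thesis
    proof eventually_elim
      case (elim t)
      have z1: "norm (z' t) \<le> \<delta> / 2" using elim(1) \<delta> by simp
      have "F (z t) = - z' t - eps t *\<^sub>R z t" by (subst eq[OF elim(3)]) simp
      hence "norm (F (z t)) \<le> norm (z' t) + norm (eps t *\<^sub>R z t)"
        by (metis norm_minus_cancel norm_triangle_ineq4)
      also have "norm (eps t *\<^sub>R z t) = eps t * norm (z t)" using pos[OF elim(3)] by simp
      also have "eps t * norm (z t) \<le> (\<delta> / (2 * R)) * R"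
        using elim(2) zR[OF elim(3)] pos[OF elim(3)] by (intro mult_mono) auto
      also have "(\<delta> / (2 * R)) * R = \<delta> / 2" using R0 by simp
      finally show ?case using z1 by linarith
    qed
  qed
  define K where "K n = {u. \<forall>y. inner (F y) (y - u) \<ge> - (norm y + R) / (real n + 1)}" for n :: nat
  have Kcl: "closed (K n)" for n unfolding K_def by (rule kset_closed)
  have Kcv: "convex (K n)" for n unfolding K_def by (rule kset_convex)
  have Kanti: "K (Suc n) \<subseteq> K n" for n
  proof
    fix u assume "u \<in> K (Suc n)"
    hence u: "inner (F y) (y - u) \<ge> - (norm y + R) / (real n + 2)" for y unfolding K_def by (simp add: add.commute)
    show "u \<in> K n" unfolding K_def
    proof (clarify)
      fix y :: 'h
      have "(norm y + R) / (real n + 2) \<le> (norm y + R) / (real n + 1)"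
        using R0 by (intro divide_left_mono) auto
      moreover have "- (norm y + R) / (real n + 1) = - ((norm y + R) / (real n + 1))"
        by (rule minus_divide_left[symmetric])
      moreover have "- (norm y + R) / (real n + 2) = - ((norm y + R) / (real n + 2))"
        by (rule minus_divide_left[symmetric])
      ultimately show "- (norm y + R) / (real n + 1) \<le> inner (F y) (y - u)" using u[of y] by linarith
    qed
  qed
  have pK: "p \<in> K n" for n
  proof -
    have "inner (F y) (y - p) \<ge> 0" for y using mono[of y p] pZ by simp
    moreover have "- (norm y + R) / (real n + 1) \<le> 0" for y :: 'h
    proof -
      have "- (norm y + R) \<le> 0" using R0 norm_ge_zero[of y] by linarith
      thus ?thesis by (intro divide_nonpos_pos) auto
    qed
    ultimately show ?thesis unfolding K_def by (auto intro: order_trans)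
  qed
  have "\<forall>n. \<exists>q. q \<in> K n \<and> (\<forall>u\<in>K n. norm q \<le> norm u)"
    using min_norm_exists[OF Kcl Kcv] pK by blast
  from choice[OF this] obtain mm where mm: "\<And>n. mm n \<in> K n" "\<And>n u. u \<in> K n \<Longrightarrow> norm (mm n) \<le> norm u"
    by blast
  obtain m where mlim: "mm \<longlonglongrightarrow> m" and mK: "\<And>n. m \<in> K n" and mp: "norm m \<le> norm p"
    using selection[where K = K and mm = mm and p = p, OF Kcl Kcv Kanti pK mm] by blast
  have mZ: "inner (F y) (y - m) \<ge> 0" for y
  proof -
    have lim0: "(\<lambda>n. - (norm y + R) * inverse (real (Suc n))) \<longlonglongrightarrow> 0"
      using tendsto_mult_right_zero[OF LIMSEQ_inverse_real_of_nat, of "- (norm y + R)"] .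
    show ?thesis
    proof (rule tendsto_upperbound[OF lim0 _ trivial_limit_sequentially])
      show "\<forall>\<^sub>F n in sequentially. - (norm y + R) * inverse (real (Suc n)) \<le> inner (F y) (y - m)"
        using mK unfolding K_def by (auto simp: divide_inverse add.commute)
    qed
  qed
  have Fm: "F m = 0" by (rule minty[OF cont mZ])
  define Z where "Z = {u. \<forall>y. inner (F y) (y - u) \<ge> 0}"
  have Zeq: "u \<in> Z \<longleftrightarrow> F u = 0" for u
  proof
    assume "u \<in> Z" thus "F u = 0" unfolding Z_def by (intro minty[OF cont]) auto
  next
    assume Fu: "F u = 0"
    show "u \<in> Z" unfolding Z_def
    proof (clarify)
      fix y :: 'h
      have "inner (F y - F u) (y - u) \<ge> 0" by (rule mono)
      thus "0 \<le> inner (F y) (y - u)" using Fu by simp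
    qed
  qed
  have Zcv: "convex Z" unfolding Z_def using kset_convex[where F = F and g = "\<lambda>y. 0"] by simp
  have mpeq: "m = p"
  proof (rule min_norm_unique[OF Zcv])
    show "m \<in> Z" using Zeq Fm by simp
    show "p \<in> Z" using Zeq pZ by simp
    show "\<forall>u\<in>Z. norm p \<le> norm u" using Zeq pmin by blast
    show "\<forall>u\<in>Z. norm m \<le> norm u" using Zeq pmin mp by (meson order_trans)
  qed
  have S5: "eventually (\<lambda>t. inner p (z t - p) \<ge> - \<eta>) at_top" if \<eta>: "\<eta> > 0" for \<eta>
  proof -
    define E where "E = R + 2 * norm p + 1"
    have E0: "E > 0" unfolding E_def using R0 by (simp add: add_pos_nonneg)
    have "eventually (\<lambda>n. dist (mm n) p < \<eta> / E) sequentially"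
      using mlim mpeq \<eta> E0 by (auto simp: tendsto_iff)
    then obtain n where n: "norm (mm n - p) < \<eta> / E" by (auto simp: dist_norm dest: eventually_happens)
    have "eventually (\<lambda>t. norm (F (z t)) \<le> 1 / (real n + 1)) at_top" by (rule S4) simp
    moreover have "eventually (\<lambda>t. t \<ge> T) at_top" by (rule eventually_ge_at_top)
    ultimately show ?thesis
    proof eventually_elim
      case (elim t)
      define q where "q = mm n"
      have zK: "z t \<in> K n" unfolding K_def
      proof (clarify)
        fix y :: 'h
        have "inner (F y) (y - z t) = inner (F y - F (z t)) (y - z t) + inner (F (z t)) (y - z t)"
          by (simp add: inner_simps)
        also have "\<dots> \<ge> 0 + (- (norm (F (z t)) * norm (y - z t)))"
        proof (rule add_mono)
          show "0 \<le> inner (F y - F (z t)) (y - z t)" by (rule mono)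
          show "- (norm (F (z t)) * norm (y - z t)) \<le> inner (F (z t)) (y - z t)"
            using Cauchy_Schwarz_ineq2[of "F (z t)" "y - z t"] by (simp add: abs_le_iff)
        qed
        finally have a1: "inner (F y) (y - z t) \<ge> - (norm (F (z t)) * norm (y - z t))" by simp
        have "norm (y - z t) \<le> norm y + R" using zR[OF elim(2)] norm_triangle_ineq4[of y "z t"] by linarith
        hence "norm (F (z t)) * norm (y - z t) \<le> (1 / (real n + 1)) * (norm y + R)"
          using elim(1) by (intro mult_mono) auto
        moreover have "- (norm y + R) / (real n + 1) = - ((norm y + R) / (real n + 1))"
          by (rule minus_divide_left[symmetric])
        moreover have "(1 / (real n + 1)) * (norm y + R) = (norm y + R) / (real n + 1)" by simp
        ultimately show "- (norm y + R) / (real n + 1) \<le> inner (F y) (y - z t)" using a1 by linarith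
      qed
      have qv: "inner q (z t - q) \<ge> 0" unfolding q_def
        using min_norm_var[OF Kcv[of n] mm(1)[of n], where u = "z t"] mm(2) zK by blast
      have qp: "norm q \<le> norm p" unfolding q_def using mm(2) pK by blast
      have decomp: "inner p (z t - p) = inner q (z t - q) + inner (p - q) (z t) + ((norm q)\<^sup>2 - (norm p)\<^sup>2)"
        by (simp add: inner_simps power2_norm_eq_inner inner_commute)
      have t1: "inner (p - q) (z t) \<ge> - (norm (p - q) * R)"
      proof -
        have "\<bar>inner (p - q) (z t)\<bar> \<le> norm (p - q) * norm (z t)" by (rule Cauchy_Schwarz_ineq2)
        also have "\<dots> \<le> norm (p - q) * R" using zR[OF elim(2)] by (intro mult_left_mono) auto
        finally show ?thesis by (simp add: abs_le_iff)
      qed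
      have t2: "(norm q)\<^sup>2 - (norm p)\<^sup>2 \<ge> - (norm (p - q) * (2 * norm p))"
      proof -
        have "(norm p)\<^sup>2 - (norm q)\<^sup>2 = (norm p - norm q) * (norm p + norm q)" by (simp add: power2_eq_square algebra_simps)
        also have "\<dots> \<le> norm (p - q) * (2 * norm p)"
          using qp norm_triangle_ineq2[of p q] by (intro mult_mono) auto
        finally show ?thesis by simp
      qed
      have "norm (p - q) * E \<le> \<eta>"
      proof -
        have "norm (p - q) < \<eta> / E" using n unfolding q_def by (simp add: norm_minus_commute)
        thus ?thesis using E0 by (simp add: pos_less_divide_eq less_imp_le)
      qed
      hence "norm (p - q) * R + norm (p - q) * (2 * norm p) \<le> \<eta>" unfolding E_def
        by (simp add: algebra_simps) (smt (verit) norm_ge_zero)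
      thus ?case using decomp qv t1 t2 by linarith
    qed
  qed
  show ?thesis
  proof (rule tendstoI)
    fix e :: real assume e: "e > 0"
    define \<eta> where "\<eta> = e\<^sup>2 / 2"
    have \<eta>0: "\<eta> > 0" unfolding \<eta>_def using e by simp
    have "eventually (\<lambda>t. inner p (z t - p) \<ge> - (\<eta> / 2) \<and> t \<ge> T) at_top"
      using S5[of "\<eta> / 2"] \<eta>0 eventually_ge_at_top[of T] by (auto elim: eventually_conj)
    then obtain T5 where T5: "\<And>t. t \<ge> T5 \<Longrightarrow> inner p (z t - p) \<ge> - (\<eta> / 2) \<and> t \<ge> T"
      unfolding eventually_at_top_linorder by blast
    have T5T: "T5 \<ge> T" using T5[of T5] by simp
    have dec: "h t \<le> \<eta> / 2 + max (h T5 - \<eta> / 2) 0 * (C + T5) / (C + t)" if "t \<ge> T5" for t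
    proof (rule decay_lemma[where \<phi> = h and \<phi>' = h'])
      fix t assume t: "t \<ge> T5"
      show "(h has_real_derivative h' t) (at t)" using hd T5 t by blast
    next
      fix t assume t: "t \<ge> T5" and gt: "h t > \<eta> / 2"
      have tT: "t \<ge> T" using T5 t by blast
      have "h' t \<le> - 2 * eps t * (h t + inner p (z t - p))" by (rule key[OF tT])
      also have "\<dots> \<le> - 2 * eps t * (h t - \<eta> / 2)"
        using T5[OF t] pos[OF tT] by (intro mult_left_mono_neg) auto
      also have "\<dots> \<le> - (1 / (C + t)) * (h t - \<eta> / 2)"
      proof (rule mult_right_mono)
        have "1 / (C + t) \<le> eps t" by (rule epsl[OF tT])
        moreover have "1 / (C + t) > 0" using Cpos[OF tT] by simp
        ultimately show "- 2 * eps t \<le> - (1 / (C + t))" by linarith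
        show "0 \<le> h t - \<eta> / 2" using gt by simp
      qed
      also have "- (1 / (C + t)) * (h t - \<eta> / 2) = - (h t - \<eta> / 2) / (C + t)"
        using Cpos[OF tT] by (simp add: field_simps)
      finally show "h' t \<le> - (h t - \<eta> / 2) / (C + t)" .
    qed (use Cpos T5T that in auto)
    have "filterlim (\<lambda>t. C + t) at_top at_top"
      by (rule filterlim_tendsto_add_at_top[OF tendsto_const filterlim_ident])
    hence "((\<lambda>t. max (h T5 - \<eta> / 2) 0 * (C + T5) / (C + t)) \<longlongrightarrow> 0) at_top"
      by (intro tendsto_divide_0[OF tendsto_const] filterlim_at_top_imp_at_infinity)
    hence "eventually (\<lambda>t. max (h T5 - \<eta> / 2) 0 * (C + T5) / (C + t) < \<eta> / 2) at_top"
      using \<eta>0 by (intro order_tendstoD(2)) auto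
    moreover have "eventually (\<lambda>t. t \<ge> T5) at_top" by (rule eventually_ge_at_top)
    ultimately show "eventually (\<lambda>t. dist (z t) p < e) at_top"
    proof eventually_elim
      case (elim t)
      have "h t < \<eta>" using dec[OF elim(2)] elim(1) by linarith
      moreover have "\<eta> < e\<^sup>2" unfolding \<eta>_def using e by simp
      ultimately have "h t < e\<^sup>2" by linarith
      hence "(norm (z t - p))\<^sup>2 < e\<^sup>2" unfolding hn .
      hence "norm (z t - p) < e" using e by (simp add: power_less_imp_less_base)
      thus ?case by (simp add: dist_norm)
    qed
  qed
qed

lemma grad_ineq:
  fixes f :: "'a::real_inner \<Rightarrow> real"
  assumes cvx: "convex_on UNIV f" and fg: "\<And>z. (f has_derivative (\<lambda>h. inner (gradf z) h)) (at z)"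
  shows "f w \<ge> f u + inner (gradf u) (w - u)"
proof -
  define \<phi> where "\<phi> s = f (u + s *\<^sub>R (w - u))" for s :: real
  have c\<phi>: "convex_on UNIV \<phi>"
  proof (rule convex_onI)
    fix t a b :: real assume t: "0 < t" "t < 1"
    have e: "u + ((1 - t) *\<^sub>R a + t *\<^sub>R b) *\<^sub>R (w - u) = (1 - t) *\<^sub>R (u + a *\<^sub>R (w - u)) + t *\<^sub>R (u + b *\<^sub>R (w - u))"
      by (simp add: algebra_simps)
    show "\<phi> ((1 - t) *\<^sub>R a + t *\<^sub>R b) \<le> (1 - t) * \<phi> a + t * \<phi> b"
      unfolding \<phi>_def e using convex_onD[OF cvx, of t "u + a *\<^sub>R (w - u)" "u + b *\<^sub>R (w - u)"] t by simp
  qed simp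
  have l: "((\<lambda>s. u + s *\<^sub>R (w - u)) has_derivative (\<lambda>h. h *\<^sub>R (w - u))) (at 0)"
    by (auto intro!: derivative_eq_intros)
  have "(\<phi> has_derivative (\<lambda>h. inner (gradf u) (h *\<^sub>R (w - u)))) (at 0)"
    unfolding \<phi>_def using has_derivative_compose[OF l fg[of "u + 0 *\<^sub>R (w - u)"]] by simp
  moreover have "(\<lambda>h. inner (gradf u) (h *\<^sub>R (w - u))) = (*) (inner (gradf u) (w - u))"
    by (auto simp: fun_eq_iff)
  ultimately have d\<phi>: "(\<phi> has_field_derivative inner (gradf u) (w - u)) (at 0)"
    by (simp add: has_field_derivative_def)
  have "\<phi> 1 - \<phi> 0 \<ge> inner (gradf u) (w - u) * (1 - 0)"
    by (rule convex_on_imp_above_tangent[OF c\<phi>]) (use d\<phi> in auto)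
  thus ?thesis unfolding \<phi>_def by simp
qed

lemma grad_const:
  fixes f :: "'a::real_inner \<Rightarrow> real"
  assumes gi: "\<And>u w. f w \<ge> f u + inner (gradf u) (w - u)"
    and fg: "\<And>z. (f has_derivative (\<lambda>h. inner (gradf z) h)) (at z)"
    and fxy: "f x = f y" and orth: "inner (gradf y) (x - y) = 0"
  shows "gradf x = gradf y"
proof -
  define d where "d = gradf x - gradf y"
  define \<psi> where "\<psi> s = f (x - s *\<^sub>R d)" for s :: real
  have l: "((\<lambda>s. x - s *\<^sub>R d) has_derivative (\<lambda>h. - (h *\<^sub>R d))) (at 0)"
    by (auto intro!: derivative_eq_intros)
  have "(\<psi> has_derivative (\<lambda>h. inner (gradf x) (- (h *\<^sub>R d)))) (at 0)"
    unfolding \<psi>_def using has_derivative_compose[OF l fg[of "x - 0 *\<^sub>R d"]] by simp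
  moreover have "(\<lambda>h. inner (gradf x) (- (h *\<^sub>R d))) = (*) (- inner (gradf x) d)"
    by (auto simp: fun_eq_iff)
  ultimately have d\<psi>: "(\<psi> has_field_derivative (- inner (gradf x) d)) (at 0)"
    by (simp add: has_field_derivative_def)
  hence q: "((\<lambda>s. (\<psi> s - \<psi> 0) / (s - 0)) \<longlongrightarrow> - inner (gradf x) d) (at 0)"
    by (simp add: has_field_derivative_iff)
  have q': "((\<lambda>s. (\<psi> s - \<psi> 0) / (s - 0)) \<longlongrightarrow> - inner (gradf x) d) (at_right 0)"
    using tendsto_mono[OF at_le[OF subset_UNIV] q] .
  have lb: "eventually (\<lambda>s. (\<psi> s - \<psi> 0) / (s - 0) \<ge> - inner (gradf y) d) (at_right 0)"
  proof (rule eventually_mono[OF eventually_at_right_less])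
    fix s :: real assume s: "s > 0"
    have "\<psi> s \<ge> f y + inner (gradf y) ((x - s *\<^sub>R d) - y)" unfolding \<psi>_def by (rule gi)
    also have "f y + inner (gradf y) ((x - s *\<^sub>R d) - y) = \<psi> 0 - s * inner (gradf y) d"
      unfolding \<psi>_def using fxy orth by (simp add: inner_simps)
    finally have "\<psi> s - \<psi> 0 \<ge> s * (- inner (gradf y) d)" by simp
    thus "(\<psi> s - \<psi> 0) / (s - 0) \<ge> - inner (gradf y) d" using s by (simp add: pos_le_divide_eq mult.commute)
  qed
  have "- inner (gradf y) d \<le> - inner (gradf x) d"
    by (rule tendsto_lowerbound[OF q' lb]) simp
  hence "inner d d \<le> 0" unfolding d_def by (simp add: inner_simps)
  thus ?thesis unfolding d_def by (metis antisym inner_ge_zero inner_eq_zero_iff right_minus_eq)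
qed

lemma zeros_closed_convex:
  fixes F :: "'a::real_inner \<Rightarrow> 'a"
  assumes mono: "\<And>u v. inner (F u - F v) (u - v) \<ge> 0" and cont: "\<And>u. isCont F u"
  shows "closed {u. F u = 0}" "convex {u. F u = 0}"
proof -
  have eq: "{u. F u = 0} = {u. \<forall>y. inner (F y) (y - u) \<ge> 0}"
  proof (intro set_eqI iffI; clarify)
    fix u assume "F u = 0"
    thus "\<And>y. inner (F y) (y - u) \<ge> 0" using mono by (metis diff_zero)
  next
    fix u assume "\<forall>y. inner (F y) (y - u) \<ge> 0"
    thus "F u = 0" by (intro minty[OF cont]) auto
  qed
  show "closed {u. F u = 0}" unfolding eq using kset_closed[where F = F and g = "\<lambda>y. 0"] by simp
  show "convex {u. F u = 0}" unfolding eq using kset_convex[where F = F and g = "\<lambda>y. 0"] by simp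
qed
theorem proposition3p8:
  fixes f :: "'x::{real_inner,complete_space} \<Rightarrow> real"
    and gradf :: "'x \<Rightarrow> 'x"
    and A :: "'x \<Rightarrow> 'y::{real_inner,complete_space}"
    and Aadj :: "'y \<Rightarrow> 'x"
    and b :: 'y
    and eps eps' eps'' :: "real \<Rightarrow> real"
    and t0 tp :: real
    and x x' :: "real \<Rightarrow> 'x"
    and l l' :: "real \<Rightarrow> 'y"
  assumes f_convex: "convex_on UNIV f"
    and f_grad: "\<And>z. (f has_derivative (\<lambda>h. inner (gradf z) h)) (at z)"
    and grad_cont: "continuous_on UNIV gradf"
    and grad_lip: "\<And>B. bounded B \<Longrightarrow>
        \<exists>L. \<forall>u\<in>B. \<forall>v\<in>B. norm (gradf u - gradf v) \<le> L * norm (u - v)"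
    and A_lin: "bounded_linear A"
    and A_adj: "\<And>u v. inner (A u) v = inner u (Aadj v)"
    and t0_nonneg: "t0 \<ge> 0"
    and eps_pos: "\<And>t. t \<ge> t0 \<Longrightarrow> eps t > 0"
    and eps_lim: "(eps \<longlongrightarrow> 0) at_top"
    and eps_d1: "\<And>t. t \<ge> t0 \<Longrightarrow> (eps has_real_derivative eps' t) (at t within {t0..})"
    and eps_d2: "\<And>t. t \<ge> t0 \<Longrightarrow> (eps' has_real_derivative eps'' t) (at t within {t0..})"
    and eps''_cont: "continuous_on {t0..} eps''"
    and SM_nonempty: "opt_solutions f A b \<times> lagrange_multipliers gradf Aadj (opt_solutions f A b) \<noteq> {}"
    and x_deriv: "\<And>t. t \<ge> t0 \<Longrightarrow> (x has_vector_derivative x' t) (at t within {t0..})"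
    and l_deriv: "\<And>t. t \<ge> t0 \<Longrightarrow> (l has_vector_derivative l' t) (at t within {t0..})"
    and x'_cont: "continuous_on {t0..} x'"
    and l'_cont: "continuous_on {t0..} l'"
    and eq_x: "\<And>t. t \<ge> t0 \<Longrightarrow> x' t + gradf (x t) + Aadj (l t) + eps t *\<^sub>R x t = 0"
    and eq_l: "\<And>t. t \<ge> t0 \<Longrightarrow> l' t + b - A (x t) + eps t *\<^sub>R l t = 0"
    and tp_ge: "tp \<ge> t0"
    and cond1: "\<And>t. t \<ge> tp \<Longrightarrow> (eps t)\<^sup>2 + eps' t \<ge> 0"
    and cond2: "\<And>t. t \<ge> tp \<Longrightarrow> 2 * eps t * eps' t + eps'' t \<le> 0"
  shows "((\<lambda>t. (x t, l t)) \<longlongrightarrow>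
           proj_set (opt_solutions f A b \<times> lagrange_multipliers gradf Aadj (opt_solutions f A b)) (0, 0))
         at_top"
proof -
  define T where "T = tp + 1"
  have Tt0: "T > t0" unfolding T_def using tp_ge by simp
  have atT: "at t within {t0..} = at t" if "t \<ge> T" for t
    using that Tt0 by (intro at_within_interior) auto
  define F where "F w = (gradf (fst w) + Aadj (snd w), b - A (fst w))" for w :: "'x \<times> 'y"
  define z where "z t = (x t, l t)" for t
  define z' where "z' t = (x' t, l' t)" for t
  have Adiff: "A (u - v) = A u - A v" for u v using A_lin by (simp add: linear_simps)
  have adjsw: "inner (Aadj a) u = inner a (A u)" for a u using A_adj[of u a] by (simp add: inner_commute)
  have Aadj_add: "Aadj (a + c) = Aadj a + Aadj c" for a c
  proof -
    have "inner u (Aadj (a + c) - Aadj a - Aadj c) = 0" for u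
      by (simp add: inner_simps A_adj[symmetric])
    from this[of "Aadj (a + c) - Aadj a - Aadj c"] have "Aadj (a + c) - Aadj a - Aadj c = 0" by simp
    thus ?thesis by (simp add: algebra_simps)
  qed
  have Aadj_scale: "Aadj (r *\<^sub>R a) = r *\<^sub>R Aadj a" for r a
  proof -
    have "inner u (Aadj (r *\<^sub>R a) - r *\<^sub>R Aadj a) = 0" for u
      by (simp add: inner_simps A_adj[symmetric])
    from this[of "Aadj (r *\<^sub>R a) - r *\<^sub>R Aadj a"] have "Aadj (r *\<^sub>R a) - r *\<^sub>R Aadj a = 0" by simp
    thus ?thesis by simp
  qed
  obtain KA where KA: "\<And>u. norm (A u) \<le> norm u * KA" and KA0: "KA > 0"
    using bounded_linear.pos_bounded[OF A_lin] by blast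
  have Aadj_bl: "bounded_linear Aadj"
  proof (rule bounded_linear_intro[where K = KA])
    show "Aadj (a + c) = Aadj a + Aadj c" for a c by (rule Aadj_add)
    show "Aadj (r *\<^sub>R a) = r *\<^sub>R Aadj a" for r a by (rule Aadj_scale)
    show "norm (Aadj v) \<le> norm v * KA" for v
    proof (cases "Aadj v = 0")
      case True thus ?thesis using KA0 by simp
    next
      case False
      have "(norm (Aadj v))\<^sup>2 = inner (A (Aadj v)) v" using A_adj[of "Aadj v" v] by (simp add: power2_norm_eq_inner)
      also have "\<dots> \<le> norm (A (Aadj v)) * norm v" by (rule Cauchy_Schwarz_ineq2[THEN abs_le_D1])
      also have "\<dots> \<le> (norm (Aadj v) * KA) * norm v" using KA by (intro mult_right_mono) auto
      finally have "norm (Aadj v) * norm (Aadj v) \<le> norm (Aadj v) * (norm v * KA)"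
        by (simp add: power2_eq_square algebra_simps)
      thus ?thesis using False by simp
    qed
  qed
  have gi: "f w \<ge> f u + inner (gradf u) (w - u)" for u w by (rule grad_ineq[OF f_convex f_grad])
  have gmono: "inner (gradf u - gradf v) (u - v) \<ge> 0" for u v
    using gi[of u v] gi[of v u] by (simp add: inner_simps)
  have mono: "inner (F u - F v) (u - v) \<ge> 0" for u v
  proof -
    obtain u1 u2 where u: "u = (u1, u2)" by (cases u)
    obtain v1 v2 where v: "v = (v1, v2)" by (cases v)
    have m1: "inner (Aadj u2 - Aadj v2) (u1 - v1) = inner (u2 - v2) (A u1 - A v1)"
      by (simp add: inner_simps adjsw Adiff)
    have "inner (F u - F v) (u - v) = inner (gradf u1 - gradf v1) (u1 - v1)
        + inner (Aadj u2 - Aadj v2) (u1 - v1) - inner (A u1 - A v1) (u2 - v2)"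
      unfolding u v F_def by (simp add: inner_simps algebra_simps)
    also have "\<dots> = inner (gradf u1 - gradf v1) (u1 - v1)" using m1 by (simp add: inner_commute)
    finally show ?thesis using gmono by simp
  qed
  have contF: "isCont F u" for u
  proof -
    have cg: "continuous_on UNIV gradf" by (rule grad_cont)
    have "continuous_on UNIV F" unfolding F_def
      by (intro continuous_intros continuous_on_compose2[OF cg] linear_continuous_on[OF Aadj_bl]
          continuous_on_compose2[OF linear_continuous_on[OF Aadj_bl]]
          continuous_on_compose2[OF linear_continuous_on[OF A_lin]]) auto
    thus ?thesis using continuous_on_eq_continuous_at[OF open_UNIV, of F] by blast
  qed
  let ?S = "opt_solutions f A b"
  let ?M = "lagrange_multipliers gradf Aadj (opt_solutions f A b)"
  have SMeq: "?S \<times> ?M = {w. F w = 0}"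
  proof (intro set_eqI iffI)
    fix w assume "w \<in> ?S \<times> ?M"
    then obtain u lam y where w: "w = (u, lam)" and uS: "u \<in> ?S" and yS: "y \<in> ?S" and gy: "gradf y + Aadj lam = 0"
      unfolding lagrange_multipliers_def by auto
    have Au: "A u = b" and Ay: "A y = b" using uS yS unfolding opt_solutions_def by auto
    have fxy: "f u = f y" using uS yS Au Ay unfolding opt_solutions_def by (auto intro: antisym)
    have gy': "gradf y = - Aadj lam" using gy by (simp add: eq_neg_iff_add_eq_0)
    have "inner (gradf y) (u - y) = - inner (Aadj lam) (u - y)" unfolding gy' by simp
    also have "\<dots> = 0" by (simp add: adjsw Adiff Au Ay)
    finally have "gradf u = gradf y" by (intro grad_const[OF gi f_grad fxy])
    thus "w \<in> {w. F w = 0}" unfolding w F_def using gy Au by (simp add: zero_prod_def)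
  next
    fix w assume "w \<in> {w. F w = 0}"
    then obtain u lam where w: "w = (u, lam)" and gu: "gradf u + Aadj lam = 0" and Au: "A u = b"
      unfolding F_def by (cases w) (auto simp: zero_prod_def)
    have uS: "u \<in> ?S" unfolding opt_solutions_def
    proof (intro CollectI conjI allI impI Au)
      fix v assume Av: "A v = b"
      have "f v \<ge> f u + inner (gradf u) (v - u)" by (rule gi)
      also have "inner (gradf u) (v - u) = - inner (Aadj lam) (v - u)"
      proof -
        have gu': "gradf u = - Aadj lam" using gu by (simp add: eq_neg_iff_add_eq_0)
        show ?thesis unfolding gu' by simp
      qed
      also have "\<dots> = 0" by (simp add: adjsw Adiff Au Av)
      finally show "f u \<le> f v" by simp
    qed
    moreover have "lam \<in> ?M" unfolding lagrange_multipliers_def using uS gu by blast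
    ultimately show "w \<in> ?S \<times> ?M" unfolding w by simp
  qed
  have Zcl: "closed {w. F w = 0}" and Zcv: "convex {w. F w = 0}"
    using zeros_closed_convex[OF mono contF] by auto
  have Zne: "{w. F w = 0} \<noteq> {}" using SM_nonempty SMeq by simp
  obtain p where pZ: "F p = 0" and pmin0: "\<And>u. F u = 0 \<Longrightarrow> norm p \<le> norm u"
    using min_norm_exists[OF Zcl Zcv Zne] by auto
  have proj: "proj_set (?S \<times> ?M) (0, 0) = p"
    unfolding proj_set_def SMeq
  proof (rule the_equality)
    show "p \<in> {w. F w = 0} \<and> (\<forall>q\<in>{w. F w = 0}. dist (0, 0) p \<le> dist (0, 0) q)"
      using pZ pmin0 by (simp add: zero_prod_def[symmetric] dist_0_norm)
  next
    fix q assume q: "q \<in> {w. F w = 0} \<and> (\<forall>q'\<in>{w. F w = 0}. dist (0, 0) q \<le> dist (0, 0) q')"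
    show "q = p"
    proof (rule min_norm_unique[OF Zcv])
      show "q \<in> {w. F w = 0}" using q by simp
      show "\<forall>u\<in>{w. F w = 0}. norm q \<le> norm u" using q by (simp add: zero_prod_def[symmetric] dist_0_norm)
      show "p \<in> {w. F w = 0}" using pZ by simp
      show "\<forall>u\<in>{w. F w = 0}. norm p \<le> norm u" using pmin0 by simp
    qed
  qed
  have zd: "(z has_vector_derivative z' t) (at t)" if "t \<ge> T" for t
  proof -
    have "t \<ge> t0" using that Tt0 by simp
    hence "(z has_vector_derivative z' t) (at t within {t0..})"
      unfolding z_def z'_def by (intro has_vector_derivative_Pair x_deriv l_deriv)
    thus ?thesis using atT[OF that] by simp
  qed
  have z'c: "continuous_on {T..} z'"
  proof -
    have sub: "{T..} \<subseteq> {t0..}" using Tt0 by auto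
    show ?thesis unfolding z'_def
      by (intro continuous_on_Pair continuous_on_subset[OF x'_cont sub] continuous_on_subset[OF l'_cont sub])
  qed
  have eq: "z' t = - (F (z t) + eps t *\<^sub>R z t)" if "t \<ge> T" for t
  proof -
    have tt: "t \<ge> t0" using that Tt0 by simp
    have ex: "x' t = - (gradf (x t) + Aadj (l t) + eps t *\<^sub>R x t)"
      using eq_x[OF tt] by (simp add: eq_neg_iff_add_eq_0 algebra_simps)
    have el: "l' t = - (b - A (x t) + eps t *\<^sub>R l t)"
      using eq_l[OF tt] by (simp add: eq_neg_iff_add_eq_0 algebra_simps)
    show ?thesis unfolding z'_def z_def F_def using ex el by simp
  qed
  have d1: "(eps has_real_derivative eps' t) (at t)" if "t \<ge> T" for t
    using eps_d1[of t] atT[OF that] that Tt0 by simp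
  have d2: "(eps' has_real_derivative eps'' t) (at t)" if "t \<ge> T" for t
    using eps_d2[of t] atT[OF that] that Tt0 by simp
  have pos: "eps t > 0" if "t \<ge> T" for t using eps_pos that Tt0 by simp
  have c1: "(eps t)\<^sup>2 + eps' t \<ge> 0" if "t \<ge> T" for t using cond1 that unfolding T_def by simp
  have c2: "2 * eps t * eps' t + eps'' t \<le> 0" if "t \<ge> T" for t using cond2 that unfolding T_def by simp
  have "(z \<longlongrightarrow> p) at_top"
    by (rule tikhonov_flow[where F = F and z' = z' and eps' = eps' and eps'' = eps'' and T = T,
          OF mono contF pZ pmin0 zd z'c eq d1 d2 pos eps_lim c1 c2])
  thus ?thesis unfolding proj z_def .
qed
end
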